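(* For any finite family $\mathcal{F}\subset\mathbb{R}^{n\times n}$ and any $\epsilon,\delta\in(0,1)$, there is a randomized algorithm that, for every unknown $\mathbf{A}\in\mathbb{R}^{n\times n}$, uses $O(\log(|\mathcal{F}|/\delta)/\epsilon^2)$ one-sided matvec queries of the form $\mathbf{x}\mapsto\mathbf{A}\mathbf{x}$ (and no queries with $\mathbf{A}^\mathsf{T}$) and with probability greater than $1-\delta$ returns $\tilde{\mathbf{B}}\in\mathcal{F}$ with $\|\mathbf{A}-\tilde{\mathbf{B}}\|_\mathsf{F}\le(1+\epsilon)\min_{\mathbf{B}\in\mathcal{F}}\|\mathbf{A}-\mathbf{B}\|_\mathsf{F}$.
   Context: One-sided matvec model: the algorithm knows $\mathcal{F}$ but accesses the unknown matrix $\mathbf{A}$ only via products $\mathbf{x}\mapsto\mathbf{A}\mathbf{x}$ for vectors of its choice. $\|\cdot\|_\mathsf{F}$ is the Frobenius norm. *)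

theory Defs
  imports "HOL-Probability.Probability_Measure" "Jordan_Normal_Form.Matrix"
begin

text \<open>A randomized adaptive one-sided matvec
algorithm consists of a query rule Q (next query vector from the seed and previous answers)
and an output rule (matrix from seed and all answers).\<close>

type_synonym seed = "nat \<Rightarrow> real"

fun answers :: "(seed \<Rightarrow> real vec list \<Rightarrow> real vec) \<Rightarrow> real mat \<Rightarrow> seed \<Rightarrow> nat \<Rightarrow> real vec list" where
  "answers Q A \<omega> 0 = []"
| "answers Q A \<omega> (Suc k) = (let as = answers Q A \<omega> k in as @ [mult_mat_vec A (Q \<omega> as)])"

definition frob_norm :: "real mat \<Rightarrow> real" where
  "frob_norm A = sqrt (\<Sum>i<dim_row A. \<Sum>j<dim_col A. (A $$ (i,j))\<^sup>2)"

end

theory Submission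
  imports Defs "HOL-Probability.Probability" "HOL-Analysis.Harmonic_Numbers"
begin

definition rad :: "real pmf" where "rad = pmf_of_set {-1, 1}"

abbreviation RP :: "'a set \<Rightarrow> ('a \<Rightarrow> real) pmf" where
  "RP T \<equiv> Pi_pmf T 0 (\<lambda>_. rad)"

lemma set_rad: "set_pmf rad = {-1, 1}"
  unfolding rad_def by (subst set_pmf_of_set) auto

lemma pmf_rad_neg: "pmf rad (- y) = pmf rad y"
  unfolding rad_def by (subst (1 2) pmf_of_set) (auto simp: indicator_def)

lemma set_RP: "finite T \<Longrightarrow> set_pmf (RP T) = PiE_dflt T 0 (\<lambda>_. {-1, 1})"
  by (simp add: set_Pi_pmf o_def set_rad)

lemma RP_support: "finite T \<Longrightarrow> z \<in> set_pmf (RP T) \<Longrightarrow> s \<in> T \<Longrightarrow> z s = -1 \<or> z s = 1"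
  by (auto simp: set_RP PiE_dflt_def)

lemma RP_sq: "finite T \<Longrightarrow> z \<in> set_pmf (RP T) \<Longrightarrow> s \<in> T \<Longrightarrow> z s * z s = 1"
  using RP_support[of T z s] by auto

lemma RP_finite: "finite T \<Longrightarrow> finite (set_pmf (RP T))"
  by (simp add: set_RP finite_PiE_dflt)

lemma RP_int: "finite T \<Longrightarrow> integrable (measure_pmf (RP T)) (f :: _ \<Rightarrow> real)"
  by (simp add: integrable_measure_pmf_finite RP_finite)

definition flip :: "'a \<Rightarrow> ('a \<Rightarrow> real) \<Rightarrow> ('a \<Rightarrow> real)" where
  "flip a z = z(a := - z a)"

lemma flip_flip[simp]: "flip a (flip a z) = z"
  by (auto simp: flip_def fun_eq_iff)

lemma inj_flip: "inj (flip a)"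
  by (metis flip_flip injI)

lemma flip_inv:
  assumes T: "finite T" and a: "a \<in> T"
  shows "map_pmf (flip a) (RP T) = RP T"
proof (rule pmf_eqI)
  fix z
  have "pmf (map_pmf (flip a) (RP T)) z = pmf (map_pmf (flip a) (RP T)) (flip a (flip a z))"
    by simp
  also have "\<dots> = pmf (RP T) (flip a z)" by (rule pmf_map_inj'[OF inj_flip])
  also have "\<dots> = pmf (RP T) z"
  proof -
    have o: "(\<forall>x. x \<notin> T \<longrightarrow> flip a z x = 0) = (\<forall>x. x \<notin> T \<longrightarrow> z x = 0)"
      using a by (auto simp: flip_def)
    have p: "(\<Prod>x\<in>T. pmf rad (flip a z x)) = (\<Prod>x\<in>T. pmf rad (z x))"
      by (rule prod.cong) (auto simp: flip_def pmf_rad_neg)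
    show ?thesis by (simp only: pmf_Pi[OF T] o p)
  qed
  finally show "pmf (map_pmf (flip a) (RP T)) z = pmf (RP T) z" .
qed

lemma E_odd:
  fixes h :: "('a \<Rightarrow> real) \<Rightarrow> real"
  assumes T: "finite T" and a: "a \<in> T" and h: "\<And>z. h (flip a z) = - h z"
  shows "measure_pmf.expectation (RP T) h = 0"
proof -
  have "measure_pmf.expectation (RP T) h = measure_pmf.expectation (map_pmf (flip a) (RP T)) h"
    by (simp add: flip_inv[OF T a])
  also have "\<dots> = measure_pmf.expectation (RP T) (\<lambda>z. - h z)"
    by (subst integral_map_pmf) (simp add: h)
  also have "\<dots> = - measure_pmf.expectation (RP T) h" by simp
  finally show ?thesis by simp
qed

lemma E_four:
  assumes T: "finite T" and in_T: "s \<in> T" "t \<in> T" "u \<in> T" "v \<in> T"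
    and st: "s \<noteq> t" and uv: "u \<noteq> v"
  shows "measure_pmf.expectation (RP T) (\<lambda>z. z s * z t * z u * z v) =
         (if (s = u \<and> t = v) \<or> (s = v \<and> t = u) then 1 else 0)"
proof (cases "(s = u \<and> t = v) \<or> (s = v \<and> t = u)")
  case True
  have "measure_pmf.expectation (RP T) (\<lambda>z. z s * z t * z u * z v) =
        measure_pmf.expectation (RP T) (\<lambda>z. 1)"
  proof (rule integral_cong_AE)
    show "AE z in measure_pmf (RP T). z s * z t * z u * z v = 1"
    proof (rule AE_pmfI)
      fix z assume z: "z \<in> set_pmf (RP T)"
      have 1: "z s * z s = 1" "z t * z t = 1" using RP_sq[OF T z] in_T by auto
      from True show "z s * z t * z u * z v = 1"
      proof
        assume "s = u \<and> t = v" thus ?thesis using 1 by (simp add: algebra_simps)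
      next
        assume "s = v \<and> t = u" thus ?thesis using 1 by (simp add: algebra_simps)
      qed
    qed
  qed simp_all
  then show ?thesis using True by simp
next
  case False
  have ex: "\<exists>a\<in>T. (\<forall>z. (flip a z) s * (flip a z) t * (flip a z) u * (flip a z) v =
                          - (z s * z t * z u * z v))"
  proof (cases "s \<noteq> u \<and> s \<noteq> v")
    case True
    then show ?thesis using st in_T by (intro bexI[of _ s]) (auto simp: flip_def)
  next
    case False2: False
    then have "t \<noteq> u \<and> t \<noteq> v" using False st by auto
    then show ?thesis using st in_T by (intro bexI[of _ t]) (auto simp: flip_def)
  qed
  then obtain a where "a \<in> T" and
    h: "\<And>z. (flip a z) s * (flip a z) t * (flip a z) u * (flip a z) v = - (z s * z t * z u * z v)"
    by blast
  have "measure_pmf.expectation (RP T) (\<lambda>z. z s * z t * z u * z v) = 0"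
    by (rule E_odd[OF T \<open>a \<in> T\<close>]) (rule h)
  then show ?thesis using False by simp
qed

lemma QF:
  fixes G :: "'a \<Rightarrow> 'a \<Rightarrow> real"
  assumes T: "finite T" and sym: "\<And>s t. G s t = G t s"
  shows "measure_pmf.expectation (RP T)
           (\<lambda>z. ((\<Sum>s\<in>T. \<Sum>t\<in>T. G s t * z s * z t) - (\<Sum>s\<in>T. G s s))\<^sup>2)
         \<le> 2 * (\<Sum>s\<in>T. \<Sum>t\<in>T. (G s t)\<^sup>2)"
proof -
  define PP where "PP = Sigma T (\<lambda>s. T - {s})"
  define c where "c = (\<lambda>p. G (fst p) (snd p))"
  define w :: "'a\<times>'a \<Rightarrow> ('a \<Rightarrow> real) \<Rightarrow> real" where "w = (\<lambda>(p::'a\<times>'a) z. z (fst p) * z (snd p))"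
  have PPfin: "finite PP" using T by (simp add: PP_def)
  define X where "X = (\<lambda>z. \<Sum>p\<in>PP. c p * w p z)"
  have step1: "measure_pmf.expectation (RP T)
           (\<lambda>z. ((\<Sum>s\<in>T. \<Sum>t\<in>T. G s t * z s * z t) - (\<Sum>s\<in>T. G s s))\<^sup>2)
        = measure_pmf.expectation (RP T) (\<lambda>z. (X z)\<^sup>2)"
  proof (rule integral_cong_AE)
    show "AE z in measure_pmf (RP T).
            ((\<Sum>s\<in>T. \<Sum>t\<in>T. G s t * z s * z t) - (\<Sum>s\<in>T. G s s))\<^sup>2 = (X z)\<^sup>2"
    proof (rule AE_pmfI)
      fix z assume z: "z \<in> set_pmf (RP T)"
      have "(\<Sum>s\<in>T. \<Sum>t\<in>T. G s t * z s * z t) = (\<Sum>s\<in>T. G s s + (\<Sum>t\<in>T-{s}. G s t * z s * z t))"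
      proof (rule sum.cong[OF refl])
        fix s assume s: "s \<in> T"
        have "(\<Sum>t\<in>T. G s t * z s * z t) = G s s * z s * z s + (\<Sum>t\<in>T-{s}. G s t * z s * z t)"
          using T s by (rule sum.remove)
        also have "G s s * z s * z s = G s s" using RP_sq[OF T z s] by (simp add: mult.assoc)
        finally show "(\<Sum>t\<in>T. G s t * z s * z t) = G s s + (\<Sum>t\<in>T-{s}. G s t * z s * z t)" .
      qed
      also have "\<dots> = (\<Sum>s\<in>T. G s s) + (\<Sum>s\<in>T. \<Sum>t\<in>T-{s}. G s t * z s * z t)"
        by (simp add: sum.distrib)
      also have "(\<Sum>s\<in>T. \<Sum>t\<in>T-{s}. G s t * z s * z t) = X z"
        unfolding X_def PP_def c_def w_def using T
        by (subst sum.Sigma) (auto simp: case_prod_unfold mult.assoc)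
      finally show "((\<Sum>s\<in>T. \<Sum>t\<in>T. G s t * z s * z t) - (\<Sum>s\<in>T. G s s))\<^sup>2 = (X z)\<^sup>2"
        by simp
    qed
  qed simp_all
  have sq: "(X z)\<^sup>2 = (\<Sum>p\<in>PP. \<Sum>p'\<in>PP. c p * c p' * (w p z * w p' z))" for z
    unfolding X_def power2_eq_square sum_product by (intro sum.cong refl) (simp add: algebra_simps)
  have E4: "measure_pmf.expectation (RP T) (\<lambda>z. w p z * w p' z) =
            (if p' = p \<or> p' = prod.swap p then 1 else 0)" if p: "p \<in> PP" "p' \<in> PP" for p p'
  proof -
    obtain s t u v where pe: "p = (s,t)" "p' = (u,v)" by (cases p, cases p') auto
    have "s \<in> T" "t \<in> T" "u \<in> T" "v \<in> T" "s \<noteq> t" "u \<noteq> v" using p pe by (auto simp: PP_def)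
    from E_four[OF T this]
    show ?thesis using pe by (auto simp: w_def mult.assoc)
  qed
  have "measure_pmf.expectation (RP T) (\<lambda>z. (X z)\<^sup>2) =
        (\<Sum>p\<in>PP. \<Sum>p'\<in>PP. c p * c p' * measure_pmf.expectation (RP T) (\<lambda>z. w p z * w p' z))"
  proof -
    have "measure_pmf.expectation (RP T) (\<lambda>z. (X z)\<^sup>2) =
      (\<Sum>p\<in>PP. measure_pmf.expectation (RP T) (\<lambda>z. \<Sum>p'\<in>PP. c p * c p' * (w p z * w p' z)))"
      unfolding sq by (rule Bochner_Integration.integral_sum) (rule RP_int[OF T])
    also have "\<dots> = (\<Sum>p\<in>PP. \<Sum>p'\<in>PP. measure_pmf.expectation (RP T) (\<lambda>z. c p * c p' * (w p z * w p' z)))"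
      by (intro sum.cong refl Bochner_Integration.integral_sum RP_int[OF T])
    also have "\<dots> = (\<Sum>p\<in>PP. \<Sum>p'\<in>PP. c p * c p' * measure_pmf.expectation (RP T) (\<lambda>z. w p z * w p' z))"
      by simp
    finally show ?thesis .
  qed
  also have "\<dots> = (\<Sum>p\<in>PP. \<Sum>p'\<in>PP. (if p' \<in> {p, prod.swap p} then c p * c p' else 0))"
    by (intro sum.cong refl) (simp add: E4)
  also have "\<dots> = (\<Sum>p\<in>PP. 2 * (c p)\<^sup>2)"
  proof (intro sum.cong refl)
    fix p assume p: "p \<in> PP"
    have ne: "prod.swap p \<noteq> p" using p by (cases p) (auto simp: PP_def)
    have sw: "prod.swap p \<in> PP" using p by (cases p) (auto simp: PP_def)
    have "(\<Sum>p'\<in>PP. (if p' \<in> {p, prod.swap p} then c p * c p' else 0)) =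
          (\<Sum>p'\<in>PP \<inter> {p, prod.swap p}. c p * c p')"
      using PPfin by (simp add: sum.inter_restrict)
    also have "PP \<inter> {p, prod.swap p} = {p, prod.swap p}" using p sw by auto
    also have "(\<Sum>p'\<in>{p, prod.swap p}. c p * c p') = c p * c p + c p * c (prod.swap p)"
      using ne by (simp add: sum.insert)
    also have "c (prod.swap p) = c p" by (cases p) (simp add: c_def sym)
    finally show "(\<Sum>p'\<in>PP. (if p' \<in> {p, prod.swap p} then c p * c p' else 0)) = 2 * (c p)\<^sup>2"
      by (simp add: power2_eq_square)
  qed
  also have "\<dots> = 2 * (\<Sum>s\<in>T. \<Sum>t\<in>T-{s}. (G s t)\<^sup>2)"
    unfolding PP_def c_def using T by (subst sum.Sigma) (auto simp: case_prod_unfold sum_distrib_left)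
  also have "\<dots> \<le> 2 * (\<Sum>s\<in>T. \<Sum>t\<in>T. (G s t)\<^sup>2)"
    using T by (intro mult_left_mono sum_mono sum_mono2) auto
  finally show ?thesis using step1 by simp
qed

lemma cheb:
  fixes X :: "_ \<Rightarrow> real"
  assumes T: "finite T" and c: "c > 0"
  shows "measure_pmf.prob (RP T) {z. \<bar>X z\<bar> > c} \<le> measure_pmf.expectation (RP T) (\<lambda>z. (X z)\<^sup>2) / c\<^sup>2"
proof -
  have "measure_pmf.prob (RP T) {z. \<bar>X z\<bar> > c} \<le> measure_pmf.prob (RP T) {z \<in> space (measure_pmf (RP T)). c\<^sup>2 \<le> (X z)\<^sup>2}"
  proof (rule measure_pmf.finite_measure_mono)
    show "{z. c < \<bar>X z\<bar>} \<subseteq> {z \<in> space (measure_pmf (RP T)). c\<^sup>2 \<le> (X z)\<^sup>2}"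
      using c by (auto simp: abs_le_square_iff[symmetric] abs_of_pos)
  qed simp
  also have "\<dots> \<le> measure_pmf.expectation (RP T) (\<lambda>z. (X z)\<^sup>2) / c\<^sup>2"
    by (rule integral_Markov_inequality_measure[where A = UNIV]) (use c RP_int[OF T] in auto)
  finally show ?thesis .
qed

lemma block:
  fixes D :: "nat \<Rightarrow> nat \<Rightarrow> real" and m n :: nat and \<eta> :: real
  assumes m: "m > 0" and eta: "\<eta> > 0"
  shows "measure_pmf.prob (RP ({..<m} \<times> {..<n}))
          {z. \<bar>(\<Sum>l<m. \<Sum>r<n. (\<Sum>j<n. D r j * z (l,j))\<^sup>2) / m - (\<Sum>r<n. \<Sum>j<n. (D r j)\<^sup>2)\<bar>
              > \<eta> * (\<Sum>r<n. \<Sum>j<n. (D r j)\<^sup>2)}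
         \<le> 2 / (m * \<eta>\<^sup>2)"
proof -
  define U where "U = {..<m} \<times> {..<n}"
  define Tr where "Tr = (\<Sum>r<n. \<Sum>j<n. (D r j)\<^sup>2)"
  define Y where "Y = (\<lambda>z. (\<Sum>l<m. \<Sum>r<n. (\<Sum>j<n. D r j * z (l,j))\<^sup>2) / m)"
  have Ufin: "finite U" by (simp add: U_def)
  have Tr0: "Tr \<ge> 0" by (simp add: Tr_def sum_nonneg)
  show ?thesis
  proof (cases "Tr = 0")
    case True
    then have "\<forall>r\<in>{..<n}. \<forall>j\<in>{..<n}. D r j = 0"
      unfolding Tr_def by (subst (asm) sum_nonneg_eq_0_iff) (auto simp: sum_nonneg_eq_0_iff sum_nonneg)
    then have "\<And>z. Y z = 0" by (simp add: Y_def)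
    then have "{z. \<bar>Y z - Tr\<bar> > \<eta> * Tr} = {}" using True by simp
    then show ?thesis using m eta unfolding Y_def Tr_def by simp
  next
    case False
    then have Trp: "Tr > 0" using Tr0 by simp
    define H where "H = (\<lambda>j j'. \<Sum>r<n. D r j * D r j')"
    define G where "G = (\<lambda>(s::nat\<times>nat) (t::nat\<times>nat). if fst s = fst t then H (snd s) (snd t) / m else 0)"
    have Gsym: "G s t = G t s" for s t
      by (simp add: G_def H_def mult.commute)
    have a: "Y z = (\<Sum>s\<in>U. \<Sum>t\<in>U. G s t * z s * z t)" for z
    proof -
      have row: "(\<Sum>r<n. (\<Sum>j<n. D r j * z (l,j))\<^sup>2) = (\<Sum>j<n. \<Sum>j'<n. H j j' * z (l,j) * z (l,j'))" for l
      proof -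
        have "(\<Sum>r<n. (\<Sum>j<n. D r j * z (l,j))\<^sup>2) = (\<Sum>r<n. \<Sum>j<n. \<Sum>j'<n. D r j * D r j' * z (l,j) * z (l,j'))"
          unfolding power2_eq_square sum_product by (intro sum.cong refl) (simp add: algebra_simps)
        also have "\<dots> = (\<Sum>j<n. \<Sum>r<n. \<Sum>j'<n. D r j * D r j' * z (l,j) * z (l,j'))"
          by (rule sum.swap)
        also have "\<dots> = (\<Sum>j<n. \<Sum>j'<n. \<Sum>r<n. D r j * D r j' * z (l,j) * z (l,j'))"
          by (intro sum.cong refl sum.swap)
        also have "\<dots> = (\<Sum>j<n. \<Sum>j'<n. H j j' * z (l,j) * z (l,j'))"
          unfolding H_def by (simp add: sum_distrib_right)
        finally show ?thesis .
      qed
      have blk: "(\<Sum>l'<m. \<Sum>j'<n. G (l,j) (l',j') * z (l,j) * z (l',j')) = (\<Sum>j'<n. H j j' / m * z (l,j) * z (l,j'))"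
        if "l < m" for l j
      proof -
        have "(\<Sum>l'<m. \<Sum>j'<n. G (l,j) (l',j') * z (l,j) * z (l',j'))
              = (\<Sum>l'<m. if l = l' then (\<Sum>j'<n. H j j' / m * z (l,j) * z (l',j')) else 0)"
          by (intro sum.cong refl) (auto simp: G_def)
        also have "\<dots> = (\<Sum>j'<n. H j j' / m * z (l,j) * z (l,j'))" using that by (simp add: sum.delta)
        finally show ?thesis .
      qed
      have "Y z = (\<Sum>l<m. \<Sum>j<n. \<Sum>j'<n. H j j' / m * z (l,j) * z (l,j'))"
        unfolding Y_def row by (simp add: sum_divide_distrib)
      also have "\<dots> = (\<Sum>l<m. \<Sum>j<n. \<Sum>l'<m. \<Sum>j'<n. G (l,j) (l',j') * z (l,j) * z (l',j'))"
        by (rule sum.cong[OF refl], rule sum.cong[OF refl]) (simp add: blk)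
      also have "\<dots> = (\<Sum>s\<in>U. \<Sum>t\<in>U. G s t * z s * z t)"
        unfolding U_def by (simp only: sum.cartesian_product')
      finally show ?thesis .
    qed
    have b: "(\<Sum>s\<in>U. G s s) = Tr"
    proof -
      have "(\<Sum>s\<in>U. G s s) = (\<Sum>l<m. \<Sum>j<n. H j j / m)"
        unfolding U_def G_def by (simp add: sum.cartesian_product')
      also have "\<dots> = (\<Sum>j<n. H j j)" using m by (simp add: sum_divide_distrib[symmetric])
      also have "\<dots> = Tr" unfolding H_def Tr_def
        by (subst sum.swap) (simp add: power2_eq_square)
      finally show ?thesis .
    qed
    define cc where "cc = (\<lambda>j. \<Sum>r<n. (D r j)\<^sup>2)"
    have c: "(\<Sum>s\<in>U. \<Sum>t\<in>U. (G s t)\<^sup>2) \<le> Tr\<^sup>2 / m"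
    proof -
      have blk: "(\<Sum>l'<m. \<Sum>j'<n. (G (l,j) (l',j'))\<^sup>2) = (\<Sum>j'<n. (H j j')\<^sup>2 / m\<^sup>2)"
        if "l < m" for l j
      proof -
        have "(\<Sum>l'<m. \<Sum>j'<n. (G (l,j) (l',j'))\<^sup>2)
              = (\<Sum>l'<m. if l = l' then (\<Sum>j'<n. (H j j')\<^sup>2 / m\<^sup>2) else 0)"
          by (intro sum.cong refl) (auto simp: G_def power_divide)
        also have "\<dots> = (\<Sum>j'<n. (H j j')\<^sup>2 / m\<^sup>2)" using that by (simp add: sum.delta)
        finally show ?thesis .
      qed
      have "(\<Sum>s\<in>U. \<Sum>t\<in>U. (G s t)\<^sup>2) = (\<Sum>l<m. \<Sum>j<n. \<Sum>l'<m. \<Sum>j'<n. (G (l,j) (l',j'))\<^sup>2)"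
        unfolding U_def by (simp only: sum.cartesian_product')
      also have "\<dots> = (\<Sum>l<m. \<Sum>j<n. \<Sum>j'<n. (H j j')\<^sup>2 / m\<^sup>2)"
        by (rule sum.cong[OF refl], rule sum.cong[OF refl]) (simp add: blk)
      also have "\<dots> = (\<Sum>j<n. \<Sum>j'<n. (H j j')\<^sup>2) / m"
        using m by (simp add: sum_divide_distrib[symmetric] power2_eq_square)
      also have "(\<Sum>j<n. \<Sum>j'<n. (H j j')\<^sup>2) \<le> (\<Sum>j<n. \<Sum>j'<n. cc j * cc j')"
        unfolding H_def cc_def by (intro sum_mono Cauchy_Schwarz_ineq_sum)
      also have "\<dots> = Tr\<^sup>2"
      proof -
        have "(\<Sum>j<n. \<Sum>j'<n. cc j * cc j') = (\<Sum>j<n. cc j)\<^sup>2"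
          by (simp add: power2_eq_square sum_product)
        moreover have "(\<Sum>j<n. cc j) = Tr" unfolding cc_def Tr_def by (rule sum.swap)
        ultimately show ?thesis by simp
      qed
      finally show ?thesis using m by (simp add: divide_right_mono)
    qed
    have "measure_pmf.prob (RP U) {z. \<bar>Y z - Tr\<bar> > \<eta> * Tr}
          \<le> measure_pmf.expectation (RP U) (\<lambda>z. (Y z - Tr)\<^sup>2) / (\<eta> * Tr)\<^sup>2"
      by (rule cheb[OF Ufin]) (use Trp eta in simp)
    also have "measure_pmf.expectation (RP U) (\<lambda>z. (Y z - Tr)\<^sup>2) \<le> 2 * (Tr\<^sup>2 / m)"
      using QF[of U G, OF Ufin Gsym] c unfolding a b[symmetric] by linarith
    then have "measure_pmf.expectation (RP U) (\<lambda>z. (Y z - Tr)\<^sup>2) / (\<eta> * Tr)\<^sup>2 \<le> 2 * (Tr\<^sup>2 / m) / (\<eta> * Tr)\<^sup>2"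
      by (rule divide_right_mono) simp
    also have "2 * (Tr\<^sup>2 / m) / (\<eta> * Tr)\<^sup>2 = 2 / (m * \<eta>\<^sup>2)"
      using Trp eta m by (simp add: field_simps power2_eq_square)
    finally show ?thesis unfolding U_def Y_def Tr_def .
  qed
qed

definition med :: "nat \<Rightarrow> (nat \<Rightarrow> real) \<Rightarrow> real" where
  "med g v = Min {v i | i. i < g \<and> g < 2 * card {j. j < g \<and> v j \<le> v i}}"

lemma med_in:
  assumes bad: "2 * card {i. i < g \<and> \<not> (a \<le> v i \<and> v i \<le> b)} < g"
  shows "a \<le> med g v \<and> med g v \<le> b"
proof -
  define good where "good = {i. i < g \<and> a \<le> v i \<and> v i \<le> b}"
  define badS where "badS = {i. i < g \<and> \<not> (a \<le> v i \<and> v i \<le> b)}"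
  define S where "S = {v i | i. i < g \<and> g < 2 * card {j. j < g \<and> v j \<le> v i}}"
  have un: "good \<union> badS = {..<g}" "good \<inter> badS = {}" by (auto simp: good_def badS_def)
  have "card good + card badS = g"
    using card_Un_disjoint[of good badS] un by (auto simp: good_def badS_def)
  then have cg: "g < 2 * card good" using bad unfolding badS_def by linarith
  then have gne: "good \<noteq> {}" by auto
  have gfin: "finite good" by (simp add: good_def)
  have Sfin: "finite S" unfolding S_def by simp
  obtain k where k: "k \<in> good" "\<And>i. i \<in> good \<Longrightarrow> v i \<le> v k"
    using Max_in[of "v ` good"] Max_ge[of "v ` good"] gfin gne by fastforce
  have "good \<subseteq> {j. j < g \<and> v j \<le> v k}" using k by (auto simp: good_def)
  then have "card good \<le> card {j. j < g \<and> v j \<le> v k}" by (intro card_mono) auto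
  then have "v k \<in> S" using cg k(1) unfolding S_def good_def by fastforce
  then have up: "med g v \<le> b" unfolding med_def S_def[symmetric]
    using Min_le[OF Sfin] k(1) good_def by fastforce
  have Sne: "S \<noteq> {}" using \<open>v k \<in> S\<close> by auto
  have "Min S \<in> S" using Min_in[OF Sfin Sne] .
  then obtain i where i: "Min S = v i" "i < g" "g < 2 * card {j. j < g \<and> v j \<le> v i}"
    unfolding S_def by blast
  have lo: "a \<le> v i"
  proof (rule ccontr)
    assume "\<not> a \<le> v i"
    then have "{j. j < g \<and> v j \<le> v i} \<subseteq> badS" by (auto simp: badS_def)
    then have "card {j. j < g \<and> v j \<le> v i} \<le> card badS" by (intro card_mono) (auto simp: badS_def)
    then show False using i(3) bad unfolding badS_def by linarith
  qed
  show ?thesis using up lo i(1) unfolding med_def S_def[symmetric] by simp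
qed

lemma amplify:
  fixes Q :: "'b pmf" and E :: "'b set"
  assumes QE: "measure_pmf.prob Q E \<le> 1/16"
  shows "measure_pmf.prob (Pi_pmf {..<g} d (\<lambda>_. Q)) {W. g \<le> 2 * card {i. i < g \<and> W i \<in> E}}
         \<le> (1/2)^g"
proof -
  let ?P = "Pi_pmf {..<g} d (\<lambda>_. Q)"
  define TT where "TT = {T. T \<subseteq> {..<g} \<and> g \<le> 2 * card T}"
  have TTfin: "finite TT" unfolding TT_def by (rule finite_subset[of _ "Pow {..<g}"]) auto
  have sub: "{W. g \<le> 2 * card {i. i < g \<and> W i \<in> E}} \<subseteq> (\<Union>T\<in>TT. {W. \<forall>i\<in>T. W i \<in> E})"
  proof
    fix W assume "W \<in> {W. g \<le> 2 * card {i. i < g \<and> W i \<in> E}}"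
    then have "{i. i < g \<and> W i \<in> E} \<in> TT" by (auto simp: TT_def)
    then show "W \<in> (\<Union>T\<in>TT. {W. \<forall>i\<in>T. W i \<in> E})" by blast
  qed
  have each: "measure_pmf.prob ?P {W. \<forall>i\<in>T. W i \<in> E} \<le> (1/4)^g" if T: "T \<in> TT" for T
  proof -
    have Tsub: "T \<subseteq> {..<g}" and Tc: "g \<le> 2 * card T" using T by (auto simp: TT_def)
    have "{W. \<forall>i\<in>T. W i \<in> E} = Pi {..<g} (\<lambda>i. if i \<in> T then E else UNIV)"
      using Tsub by (auto simp: Pi_def)
    then have "measure_pmf.prob ?P {W. \<forall>i\<in>T. W i \<in> E} =
               (\<Prod>i<g. measure_pmf.prob Q (if i \<in> T then E else UNIV))"
      by (simp add: measure_Pi_pmf_Pi)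
    also have "\<dots> = (\<Prod>i<g. if i \<in> T then measure_pmf.prob Q E else 1)"
      by (intro prod.cong refl) auto
    also have "\<dots> = measure_pmf.prob Q E ^ card T"
    proof -
      have "{..<g} \<inter> {i. i \<in> T} = T" using Tsub by auto
      then show ?thesis by (simp add: prod.If_cases)
    qed
    also have "\<dots> \<le> (1/16) ^ card T" by (intro power_mono QE) simp
    also have "(1/16::real) ^ card T = (1/4) ^ (2 * card T)" by (simp add: power_mult power2_eq_square)
    also have "\<dots> \<le> (1/4) ^ g" using Tc by (intro power_decreasing) auto
    finally show ?thesis .
  qed
  have "measure_pmf.prob ?P {W. g \<le> 2 * card {i. i < g \<and> W i \<in> E}}
        \<le> measure_pmf.prob ?P (\<Union>T\<in>TT. {W. \<forall>i\<in>T. W i \<in> E})"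
    by (rule measure_pmf.finite_measure_mono[OF sub]) simp
  also have "\<dots> \<le> (\<Sum>T\<in>TT. measure_pmf.prob ?P {W. \<forall>i\<in>T. W i \<in> E})"
    by (rule measure_pmf.finite_measure_subadditive_finite[OF TTfin]) auto
  also have "\<dots> \<le> (\<Sum>T\<in>TT. (1/4)^g)" by (intro sum_mono each)
  also have "\<dots> = card TT * (1/4)^g" by simp
  also have "\<dots> \<le> 2^g * (1/4)^g"
  proof -
    have "card TT \<le> card (Pow {..<g})" by (intro card_mono) (auto simp: TT_def)
    then have "card TT \<le> 2^g" by (simp add: card_Pow)
    then have "real (card TT) \<le> 2^g" by (metis of_nat_le_iff of_nat_numeral of_nat_power)
    then show ?thesis by (intro mult_right_mono) auto
  qed
  also have "(2::real)^g * (1/4)^g = (1/2)^g" by (simp add: power_mult_distrib[symmetric])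
  finally show ?thesis .
qed

lemma answers_len: "length (answers Q A \<omega> k) = k"
  by (induction k) (auto simp: Let_def)

lemma answers_nth:
  assumes "\<And>as. Q \<omega> as = xf (length as)"
  shows "i < k \<Longrightarrow> answers Q A \<omega> k ! i = A *\<^sub>v xf i"
proof (induction k)
  case 0 then show ?case by simp
next
  case (Suc k)
  show ?case
    using Suc by (auto simp: Let_def nth_append answers_len assms less_Suc_eq)
qed

lemma enc_idx:
  fixes i l j m n :: nat
  assumes "l < m" "j < n"
  shows "((i*m+l)*n + j) div (m*n) = i" "(((i*m+l)*n + j) mod (m*n)) div n = l"
        "((i*m+l)*n + j) mod n = j"
proof -
  have e: "(i*m+l)*n + j = i*(m*n) + (l*n + j)" by (simp add: algebra_simps)
  have lt: "l*n + j < m*n"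
  proof -
    have "l*n + j < l*n + n" using assms by simp
    also have "\<dots> = (l+1)*n" by simp
    also have "\<dots> \<le> m*n" using assms by (intro mult_right_mono) auto
    finally show ?thesis .
  qed
  show "((i*m+l)*n + j) div (m*n) = i" unfolding e using lt
    by (metis add.commute div_less div_mult_self1 add_0 mult.commute not_less0 zero_less_mult_iff)
  have md: "(i * (m * n) + (l * n + j)) mod (m * n) = l*n+j" using lt
    by (metis add.commute mod_less mod_mult_self2 mult.commute)
  show "(((i*m+l)*n + j) mod (m*n)) div n = l" unfolding e md using assms by simp
  show "((i*m+l)*n + j) mod n = j" unfolding e using assms
    by (simp add: mod_add_left_eq[symmetric] mult.assoc[symmetric])
qed

lemma mv_diff:
  fixes A B :: "real mat"
  assumes "A \<in> carrier_mat n n" "B \<in> carrier_mat n n" "v \<in> carrier_vec n" "r < n"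
  shows "(A *\<^sub>v v) $ r - (B *\<^sub>v v) $ r = (\<Sum>j<n. (A $$ (r,j) - B $$ (r,j)) * v $ j)"
  using assms
  by (simp add: scalar_prod_def atLeast0LessThan sum_subtractf[symmetric] algebra_simps)

lemma frob_diff:
  fixes A B :: "real mat"
  assumes "A \<in> carrier_mat n n" "B \<in> carrier_mat n n"
  shows "frob_norm (A - B) = sqrt (\<Sum>r<n. \<Sum>j<n. (A $$ (r,j) - B $$ (r,j))\<^sup>2)"
  using assms unfolding frob_norm_def by simp

lemma param_bounds:
  fixes \<epsilon> \<delta> :: real and k :: nat
  assumes e: "0 < \<epsilon>" "\<epsilon> < 1" and d: "0 < \<delta>" "\<delta> < 1" and k: "k \<ge> 2"
  defines "L \<equiv> ln (real k / \<delta>)"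
  defines "m \<equiv> nat \<lceil>128 / \<epsilon>\<^sup>2\<rceil>"
  defines "g \<equiv> nat \<lfloor>2 * L\<rfloor> + 1"
  shows "m > 0" "real m * (\<epsilon>/2)\<^sup>2 \<ge> 32" "real (g * m) \<le> 1000 * L / \<epsilon>\<^sup>2"
        "real k * (1/2)^g < \<delta>"
proof -
  have e2: "0 < \<epsilon>\<^sup>2" "\<epsilon>\<^sup>2 < 1" using e by (auto simp: power_less_one_iff)
  have kd: "real k / \<delta> > 2"
  proof -
    have "real k / \<delta> > real k" using d k by (simp add: less_divide_eq)
    then show ?thesis using k by linarith
  qed
  have L2: "L \<ge> ln 2" unfolding L_def using kd by simp
  have Lpos: "L \<ge> 2/3" using L2 ln2_ge_two_thirds by linarith
  have "128 / \<epsilon>\<^sup>2 > 0" using e2 by simp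
  then have mr: "real m = real_of_int \<lceil>128 / \<epsilon>\<^sup>2\<rceil>" unfolding m_def by simp
  have m1: "real m \<ge> 128 / \<epsilon>\<^sup>2" unfolding mr by linarith
  have m2: "real m \<le> 129 / \<epsilon>\<^sup>2"
  proof -
    have "real m < 128 / \<epsilon>\<^sup>2 + 1" unfolding mr by linarith
    also have "1 \<le> 1 / \<epsilon>\<^sup>2" using e2 by simp
    finally show ?thesis by simp
  qed
  have "real m > 0" using m1 \<open>128 / \<epsilon>\<^sup>2 > 0\<close> by linarith
  then show "m > 0" by simp
  show "real m * (\<epsilon>/2)\<^sup>2 \<ge> 32"
  proof -
    have "real m * \<epsilon>\<^sup>2 \<ge> 128" using m1 e2 by (simp add: field_simps)
    then show ?thesis by (simp add: power_divide)
  qed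
  have gr: "real g = real_of_int \<lfloor>2 * L\<rfloor> + 1" unfolding g_def using Lpos by simp
  have g1: "real g \<le> 4 * L" unfolding gr using Lpos by linarith
  have g2: "real g > 2 * L" unfolding gr by linarith
  show "real (g * m) \<le> 1000 * L / \<epsilon>\<^sup>2"
  proof -
    have "real (g * m) = real g * real m" by simp
    also have "\<dots> \<le> (4 * L) * (129 / \<epsilon>\<^sup>2)" using g1 m2 by (intro mult_mono) auto
    also have "\<dots> \<le> 1000 * L / \<epsilon>\<^sup>2" using Lpos e2 by (simp add: field_simps)
    finally show ?thesis .
  qed
  show "real k * (1/2)^g < \<delta>"
  proof -
    have "(2::real)^g = exp (real g * ln 2)"
      by (simp add: powr_realpow[symmetric] powr_def)
    also have "exp (real g * ln 2) > exp L"
    proof -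
      have "real g * ln 2 > 2 * L * ln 2" using g2 ln2_ge_two_thirds by (intro mult_strict_right_mono) auto
      moreover have "2 * L * ln 2 \<ge> 2 * L * (2/3)" using Lpos ln2_ge_two_thirds
        by (intro mult_left_mono) auto
      moreover have "2 * L * (2/3) \<ge> L" using Lpos by simp
      ultimately have "real g * ln 2 > L" by linarith
      then show ?thesis by simp
    qed
    also have "exp L = real k / \<delta>" unfolding L_def using kd by simp
    finally have "real k / \<delta> < 2^g" .
    then show ?thesis using d by (simp add: field_simps power_one_over)
  qed
qed

lemma main_one:
  fixes F :: "real mat set" and \<epsilon> \<delta> :: real
  assumes C: "C > 0" and F: "F = {B0}" and e: "0 < \<epsilon>" "\<epsilon> < 1" and d: "0 < \<delta>" "\<delta> < 1"
  shows "\<exists>(M :: seed measure) (q::nat) (Q :: seed \<Rightarrow> real vec list \<Rightarrow> real vec)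
        (out :: seed \<Rightarrow> real vec list \<Rightarrow> real mat).
        prob_space M \<and>
        real q \<le> C * ln (real (card F) / \<delta>) / \<epsilon>\<^sup>2 \<and>
        (\<forall>\<omega> as. Q \<omega> as \<in> carrier_vec n) \<and>
        (\<forall>A \<in> carrier_mat n n.
           let S = {\<omega> \<in> space M. out \<omega> (answers Q A \<omega> q) \<in> F \<and>
                     frob_norm (A - out \<omega> (answers Q A \<omega> q))
                       \<le> (1 + \<epsilon>) * Min ((\<lambda>B. frob_norm (A - B)) ` F)}
           in S \<in> sets M \<and> measure M S > 1 - \<delta>)"
proof (intro exI conjI allI ballI)
  let ?M = "measure_pmf (return_pmf (\<lambda>_::nat. 0::real))"
  show "prob_space ?M" by (rule measure_pmf.prob_space_axioms)
  have "ln (real (card F) / \<delta>) > 0" using F d by simp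
  then show "real 0 \<le> C * ln (real (card F) / \<delta>) / \<epsilon>\<^sup>2" using C e by simp
  show "(\<lambda>\<omega> as. 0\<^sub>v n) \<omega> as \<in> carrier_vec n" for \<omega> as by simp
  fix A :: "real mat" assume A: "A \<in> carrier_mat n n"
  have fn: "frob_norm (A - B0) \<ge> 0" by (simp add: frob_norm_def sum_nonneg)
  then have "{\<omega> \<in> space ?M. (\<lambda>\<omega> as. B0) \<omega> (answers (\<lambda>\<omega> as. 0\<^sub>v n) A \<omega> 0) \<in> F \<and>
                     frob_norm (A - (\<lambda>\<omega> as. B0) \<omega> (answers (\<lambda>\<omega> as. 0\<^sub>v n) A \<omega> 0))
                       \<le> (1 + \<epsilon>) * Min ((\<lambda>B. frob_norm (A - B)) ` F)} = space ?M"
    using F e by (auto intro!: mult_right_mono[of 1 "1+\<epsilon>", simplified])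
  then show "let S = {\<omega> \<in> space ?M. (\<lambda>\<omega> as. B0) \<omega> (answers (\<lambda>\<omega> as. 0\<^sub>v n) A \<omega> 0) \<in> F \<and>
                     frob_norm (A - (\<lambda>\<omega> as. B0) \<omega> (answers (\<lambda>\<omega> as. 0\<^sub>v n) A \<omega> 0))
                       \<le> (1 + \<epsilon>) * Min ((\<lambda>B. frob_norm (A - B)) ` F)}
           in S \<in> sets ?M \<and> measure ?M S > 1 - \<delta>"
    using d by (simp add: Let_def)
qed

lemma main_gen:
  fixes F :: "real mat set" and \<epsilon> \<delta> :: real
  assumes fin: "finite F" and F2: "card F \<ge> 2" and Fc: "F \<subseteq> carrier_mat n n"
    and e: "0 < \<epsilon>" "\<epsilon> < 1" and d: "0 < \<delta>" "\<delta> < 1"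
  shows "\<exists>(M :: seed measure) (q::nat) (Q :: seed \<Rightarrow> real vec list \<Rightarrow> real vec)
        (out :: seed \<Rightarrow> real vec list \<Rightarrow> real mat).
        prob_space M \<and>
        real q \<le> 1000 * ln (real (card F) / \<delta>) / \<epsilon>\<^sup>2 \<and>
        (\<forall>\<omega> as. Q \<omega> as \<in> carrier_vec n) \<and>
        (\<forall>A \<in> carrier_mat n n.
           let S = {\<omega> \<in> space M. out \<omega> (answers Q A \<omega> q) \<in> F \<and>
                     frob_norm (A - out \<omega> (answers Q A \<omega> q))
                       \<le> (1 + \<epsilon>) * Min ((\<lambda>B. frob_norm (A - B)) ` F)}
           in S \<in> sets M \<and> measure M S > 1 - \<delta>)"
proof -
  define L where "L = ln (real (card F) / \<delta>)"
  define m where "m = nat \<lceil>128 / \<epsilon>\<^sup>2\<rceil>"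
  define g where "g = nat \<lfloor>2 * L\<rfloor> + 1"
  define \<eta> where "\<eta> = \<epsilon> / 2"
  have pb1: "m > 0" unfolding m_def by (rule param_bounds(1)[OF e d F2])
  have pb2: "real m * (\<epsilon>/2)\<^sup>2 \<ge> 32" unfolding m_def by (rule param_bounds(2)[OF e d F2])
  have pb3: "real (g * m) \<le> 1000 * L / \<epsilon>\<^sup>2" unfolding m_def g_def L_def by (rule param_bounds(3)[OF e d F2])
  have pb4: "real (card F) * (1/2)^g < \<delta>" unfolding g_def L_def by (rule param_bounds(4)[OF e d F2])
  have m0: "m > 0" and m\<eta>: "real m * \<eta>\<^sup>2 \<ge> 32" using pb1 pb2 by (auto simp: \<eta>_def)
  have \<eta>0: "\<eta> > 0" using e by (simp add: \<eta>_def)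
  define q where "q = g * m"
  define x :: "seed \<Rightarrow> nat \<Rightarrow> real vec" where "x = (\<lambda>\<omega> k. vec n (\<lambda>j. \<omega> (k*n + j)))"
  define Q :: "seed \<Rightarrow> real vec list \<Rightarrow> real vec" where "Q = (\<lambda>\<omega> as. x \<omega> (length as))"
  define est :: "seed \<Rightarrow> real vec list \<Rightarrow> real mat \<Rightarrow> nat \<Rightarrow> real" where
    "est = (\<lambda>\<omega> as B i. (\<Sum>l<m. \<Sum>r<n. ((as ! (i*m+l)) $ r - (B *\<^sub>v x \<omega> (i*m+l)) $ r)\<^sup>2) / m)"
  define mB where "mB = (\<lambda>\<omega> as B. med g (est \<omega> as B))"
  define out :: "seed \<Rightarrow> real vec list \<Rightarrow> real mat" where
    "out = (\<lambda>\<omega> as. SOME B. B \<in> F \<and> (\<forall>B'\<in>F. mB \<omega> as B \<le> mB \<omega> as B'))"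
  define blk where "blk = RP ({..<m} \<times> {..<n})"
  define P where "P = Pi_pmf {..<g} (\<lambda>_. 0) (\<lambda>_::nat. blk)"
  define enc :: "(nat \<Rightarrow> nat \<times> nat \<Rightarrow> real) \<Rightarrow> seed" where
    "enc = (\<lambda>W t. W (t div (m*n)) ((t mod (m*n)) div n, t mod n))"
  define M where "M = measure_pmf (map_pmf enc P)"
  have Fne: "F \<noteq> {}" using F2 by auto
  show ?thesis
  proof (intro exI[of _ M] exI[of _ q] exI[of _ Q] exI[of _ out] conjI ballI allI)
    show "prob_space M" unfolding M_def by (rule measure_pmf.prob_space_axioms)
    show "real q \<le> 1000 * ln (real (card F) / \<delta>) / \<epsilon>\<^sup>2" using pb3 by (simp add: q_def L_def)
    show "Q \<omega> as \<in> carrier_vec n" for \<omega> as by (simp add: Q_def x_def)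
    fix A :: "real mat" assume A: "A \<in> carrier_mat n n"
    define D where "D = (\<lambda>B r j. A $$ (r,j) - B $$ (r,j))"
    define Tr where "Tr = (\<lambda>B. \<Sum>r<n. \<Sum>j<n. (D B r j)\<^sup>2)"
    define Yb where "Yb = (\<lambda>B (z::nat\<times>nat\<Rightarrow>real). (\<Sum>l<m. \<Sum>r<n. (\<Sum>j<n. D B r j * z (l,j))\<^sup>2) / m)"
    define Bad where "Bad = (\<lambda>B. {z. \<bar>Yb B z - Tr B\<bar> > \<eta> * Tr B})"
    define Good where "Good = {W. \<forall>B\<in>F. 2 * card {i. i < g \<and> W i \<in> Bad B} < g}"
    define S where "S = {\<omega> \<in> space M. out \<omega> (answers Q A \<omega> q) \<in> F \<and>
                     frob_norm (A - out \<omega> (answers Q A \<omega> q))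
                       \<le> (1 + \<epsilon>) * Min ((\<lambda>B. frob_norm (A - B)) ` F)}"
    have frobT: "frob_norm (A - B) = sqrt (Tr B)" if "B \<in> F" for B
      using frob_diff[OF A, of B] that Fc by (auto simp: Tr_def D_def)
    have TrN: "Tr B \<ge> 0" for B by (simp add: Tr_def sum_nonneg)
    have G1: "enc W \<in> S" if W: "W \<in> Good" for W
    proof -
      define \<omega> where "\<omega> = enc W"
      define as where "as = answers Q A \<omega> q"
      have xe: "x \<omega> (i*m+l) $ j = W i (l,j)" if "l < m" "j < n" for i l j
        using that enc_idx[OF that, of i] by (simp add: x_def \<omega>_def enc_def)
      have asn: "as ! k = A *\<^sub>v x \<omega> k" if "k < q" for k
        unfolding as_def using that by (intro answers_nth) (simp add: Q_def)
      have estY: "est \<omega> as B i = Yb B (W i)" if "i < g" "B \<in> F" for i B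
      proof -
        have Bc: "B \<in> carrier_mat n n" using that Fc by auto
        have "(\<Sum>r<n. ((as ! (i*m+l)) $ r - (B *\<^sub>v x \<omega> (i*m+l)) $ r)\<^sup>2) =
              (\<Sum>r<n. (\<Sum>j<n. D B r j * W i (l,j))\<^sup>2)" if l: "l < m" for l
        proof -
          have "i*m + l < q"
          proof -
            have "i*m + l < i*m + m" using l by simp
            also have "\<dots> = (i+1)*m" by simp
            also have "\<dots> \<le> g*m" using \<open>i < g\<close> by (intro mult_right_mono) auto
            finally show ?thesis by (simp add: q_def)
          qed
          then have "as ! (i*m+l) = A *\<^sub>v x \<omega> (i*m+l)" by (rule asn)
          moreover have "(A *\<^sub>v x \<omega> (i*m+l)) $ r - (B *\<^sub>v x \<omega> (i*m+l)) $ r = (\<Sum>j<n. D B r j * W i (l,j))"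
            if "r < n" for r
            using mv_diff[OF A Bc _ that, of "x \<omega> (i*m+l)"] xe[OF l] by (simp add: x_def D_def)
          ultimately show ?thesis by simp
        qed
        then show ?thesis unfolding est_def Yb_def by simp
      qed
      have medB: "(1 - \<eta>) * Tr B \<le> mB \<omega> as B \<and> mB \<omega> as B \<le> (1 + \<eta>) * Tr B" if B: "B \<in> F" for B
        unfolding mB_def
      proof (rule med_in)
        have "{i. i < g \<and> \<not> ((1 - \<eta>) * Tr B \<le> est \<omega> as B i \<and> est \<omega> as B i \<le> (1 + \<eta>) * Tr B)}
              = {i. i < g \<and> W i \<in> Bad B}"
          using estY[OF _ B] by (auto simp: Bad_def abs_if algebra_simps)
        then show "2 * card {i. i < g \<and> \<not> ((1 - \<eta>) * Tr B \<le> est \<omega> as B i \<and> est \<omega> as B i \<le> (1 + \<eta>) * Tr B)} < g"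
          using W B by (simp add: Good_def)
      qed
      have exmin: "\<exists>B. B \<in> F \<and> (\<forall>B'\<in>F. mB \<omega> as B \<le> mB \<omega> as B')"
      proof -
        have "Min (mB \<omega> as ` F) \<in> mB \<omega> as ` F" using fin Fne by simp
        then obtain B where "B \<in> F" "mB \<omega> as B = Min (mB \<omega> as ` F)" by auto
        then show ?thesis using fin by auto
      qed
      define Bt where "Bt = out \<omega> as"
      have Bt: "Bt \<in> F" "\<And>B'. B' \<in> F \<Longrightarrow> mB \<omega> as Bt \<le> mB \<omega> as B'"
        using someI_ex[OF exmin] unfolding Bt_def out_def by auto
      have "Min ((\<lambda>B. frob_norm (A - B)) ` F) \<in> (\<lambda>B. frob_norm (A - B)) ` F" using fin Fne by simp
      then obtain Bs where Bs: "Bs \<in> F" "Min ((\<lambda>B. frob_norm (A - B)) ` F) = frob_norm (A - Bs)" by auto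
      have "(1 - \<eta>) * Tr Bt \<le> (1 + \<eta>) * Tr Bs"
        using medB[OF Bt(1)] medB[OF Bs(1)] Bt(2)[OF Bs(1)] by linarith
      moreover have "(1 + \<eta>) * Tr Bs \<le> (1 - \<eta>) * ((1 + \<epsilon>)\<^sup>2 * Tr Bs)"
      proof -
        have "(1 + \<eta>) \<le> (1 - \<eta>) * (1 + \<epsilon>)\<^sup>2"
        proof -
          have ee: "\<epsilon> * \<epsilon> \<le> 1" using e by (intro mult_le_one) auto
          have e3: "\<epsilon> * \<epsilon> * \<epsilon> \<le> \<epsilon>" using mult_right_mono[OF ee, of \<epsilon>] e by simp
          have eq: "(1 - \<epsilon>/2) * (1 + \<epsilon>)\<^sup>2 = 1 + 3/2 * \<epsilon> - \<epsilon> * \<epsilon> * \<epsilon> / 2"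
            by (simp add: power2_eq_square algebra_simps)
          show ?thesis unfolding \<eta>_def eq using e3 e by linarith
        qed
        then show ?thesis using TrN[of Bs] by (metis mult.assoc mult_right_mono)
      qed
      ultimately have "(1 - \<eta>) * Tr Bt \<le> (1 - \<eta>) * ((1 + \<epsilon>)\<^sup>2 * Tr Bs)" by linarith
      then have "Tr Bt \<le> (1 + \<epsilon>)\<^sup>2 * Tr Bs" using e unfolding \<eta>_def by simp
      then have "sqrt (Tr Bt) \<le> sqrt ((1 + \<epsilon>)\<^sup>2 * Tr Bs)" by simp
      also have "\<dots> = (1 + \<epsilon>) * sqrt (Tr Bs)" using e by (simp add: real_sqrt_mult)
      finally have "frob_norm (A - Bt) \<le> (1 + \<epsilon>) * Min ((\<lambda>B. frob_norm (A - B)) ` F)"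
        using frobT[OF Bt(1)] frobT[OF Bs(1)] Bs(2) by simp
      then show ?thesis using Bt(1) unfolding S_def M_def Bt_def as_def \<omega>_def by simp
    qed
    have badp: "measure_pmf.prob blk (Bad B) \<le> 1/16" for B
    proof -
      have "measure_pmf.prob blk (Bad B) \<le> 2 / (m * \<eta>\<^sup>2)"
        unfolding blk_def Bad_def Yb_def Tr_def by (rule block[OF m0 \<eta>0])
      also have "\<dots> \<le> 2 / 32" using m\<eta> by (intro divide_left_mono) auto
      finally show ?thesis by simp
    qed
    have "measure_pmf.prob P (UNIV - Good) \<le> measure_pmf.prob P (\<Union>B\<in>F. {W. g \<le> 2 * card {i. i < g \<and> W i \<in> Bad B}})"
      by (rule measure_pmf.finite_measure_mono) (auto simp: Good_def)
    also have "\<dots> \<le> (\<Sum>B\<in>F. measure_pmf.prob P {W. g \<le> 2 * card {i. i < g \<and> W i \<in> Bad B}})"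
      by (rule measure_pmf.finite_measure_subadditive_finite[OF fin]) auto
    also have "\<dots> \<le> (\<Sum>B\<in>F. (1/2)^g)"
      unfolding P_def by (intro sum_mono amplify badp)
    also have "\<dots> = real (card F) * (1/2)^g" by simp
    also have "\<dots> < \<delta>" by (rule pb4)
    finally have "measure_pmf.prob P (UNIV - Good) < \<delta>" .
    then have pg: "measure_pmf.prob P Good > 1 - \<delta>"
      using measure_pmf.prob_compl[of Good P] by simp
    have sub: "Good \<subseteq> enc -` S" using G1 by blast
    have "measure_pmf.prob P Good \<le> measure_pmf.prob P (enc -` S)"
      by (rule measure_pmf.finite_measure_mono[OF sub]) simp
    then have "measure M S > 1 - \<delta>" using pg unfolding M_def by simp
    moreover have "S \<in> sets M" unfolding M_def by simp
    ultimately show "let S = {\<omega> \<in> space M. out \<omega> (answers Q A \<omega> q) \<in> F \<and>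
                     frob_norm (A - out \<omega> (answers Q A \<omega> q))
                       \<le> (1 + \<epsilon>) * Min ((\<lambda>B. frob_norm (A - B)) ` F)}
           in S \<in> sets M \<and> measure M S > 1 - \<delta>" unfolding S_def Let_def by simp
  qed
qed

theorem claim2p1:
  shows "\<exists>C>0. \<forall>n (F :: real mat set) (\<epsilon>::real) (\<delta>::real).
     finite F \<and> F \<noteq> {} \<and> F \<subseteq> carrier_mat n n \<and> 0 < \<epsilon> \<and> \<epsilon> < 1 \<and> 0 < \<delta> \<and> \<delta> < 1 \<longrightarrow>
     (\<exists>(M :: seed measure) (q::nat) (Q :: seed \<Rightarrow> real vec list \<Rightarrow> real vec)
        (out :: seed \<Rightarrow> real vec list \<Rightarrow> real mat).
        prob_space M \<and>
        real q \<le> C * ln (real (card F) / \<delta>) / \<epsilon>\<^sup>2 \<and>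
        (\<forall>\<omega> as. Q \<omega> as \<in> carrier_vec n) \<and>
        (\<forall>A \<in> carrier_mat n n.
           let S = {\<omega> \<in> space M. out \<omega> (answers Q A \<omega> q) \<in> F \<and>
                     frob_norm (A - out \<omega> (answers Q A \<omega> q))
                       \<le> (1 + \<epsilon>) * Min ((\<lambda>B. frob_norm (A - B)) ` F)}
           in S \<in> sets M \<and> measure M S > 1 - \<delta>))"
  proof (intro exI[of _ "1000::real"] conjI allI impI)
  show "(0::real) < 1000" by simp
next
  fix n and F :: "real mat set" and \<epsilon> \<delta> :: real
  assume H: "finite F \<and> F \<noteq> {} \<and> F \<subseteq> carrier_mat n n \<and> 0 < \<epsilon> \<and> \<epsilon> < 1 \<and> 0 < \<delta> \<and> \<delta> < 1"
  show "\<exists>(M :: seed measure) (q::nat) (Q :: seed \<Rightarrow> real vec list \<Rightarrow> real vec)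
        (out :: seed \<Rightarrow> real vec list \<Rightarrow> real mat).
        prob_space M \<and>
        real q \<le> 1000 * ln (real (card F) / \<delta>) / \<epsilon>\<^sup>2 \<and>
        (\<forall>\<omega> as. Q \<omega> as \<in> carrier_vec n) \<and>
        (\<forall>A \<in> carrier_mat n n.
           let S = {\<omega> \<in> space M. out \<omega> (answers Q A \<omega> q) \<in> F \<and>
                     frob_norm (A - out \<omega> (answers Q A \<omega> q))
                       \<le> (1 + \<epsilon>) * Min ((\<lambda>B. frob_norm (A - B)) ` F)}
           in S \<in> sets M \<and> measure M S > 1 - \<delta>)"
  proof (cases "card F \<ge> 2")
    case True
    then show ?thesis using main_gen[of F n \<epsilon> \<delta>] H by blast
  next
    case False
    have "card F \<noteq> 0" using H by simp
    then have "card F = 1" using False by linarith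
    then obtain B0 where "F = {B0}" by (rule card_1_singletonE)
    then show ?thesis using main_one[of 1000 F B0 \<epsilon> \<delta> n] H by simp
  qed
qed

end
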